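(* Let $K$ be a Noetherian unital commutative ring, let $A$ be a (not necessarily unital) commutative $K$-algebra such that $A\rtimes K$ is a finitely generated unital $K$-algebra, and let $s\in K$. Then the level morphism of pro-sets $$A^{(s^\infty)}\to\varprojlim\nolimits_n^{\mathrm{Pro}(\mathbf{Set})}s^nA,\qquad a\in A^{(s^n)}\mapsto s^na,$$ is an isomorphism in $\mathrm{Pro}(\mathbf{Set})$, where the right-hand side is the inverse system of ideals $\cdots\subseteq s^2A\subseteq sA\subseteq A$ with inclusions as transition maps. Moreover, the morphism of pro-sets $\varprojlim_n s^nA\to A_s$, $s^na\mapsto \frac{s^na}{1}$, into the constant pro-set $A_s$ (the localization) is a monomorphism in $\mathrm{Pro}(\mathbf{Set})$.
   Context: $A\rtimes K$ denotes $A\oplus K$ with product $(a,k)(a',k')=(aa'+ak'+a'k,kk')$. For $t\in K$ the homotope $A^{(t)}$ is the set $A$ with the product $a*b=tab$. The colocalization $A^{(s^\infty)}$ is the pro-object (inverse system) $\cdots\to A^{(s^2)}\to A^{(s)}\to A$ in $\mathrm{Pro}(\mathbf{Set})$ with transition maps $A^{(s^{n+1})}\to A^{(s^n)}$, $a\mapsto sa$. For a category $\mathbf C$, $\mathrm{Pro}(\mathbf C)$ has as objects contravariant functors $X\colon\mathbf I_X\to\mathbf C$ from small filtered categories, with $\mathrm{Hom}(X,Y)=\varprojlim_{j\in\mathbf I_Y}\varinjlim_{i\in\mathbf I_X}\mathbf C(X(i),Y(j))$; a level morphism is one given by compatible maps between the terms of inverse systems with the same index category. *)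

theory Defs
  imports Main "HOL.Modules"
begin

record ('i, 'x) pro_set =
  pleq :: "'i \<Rightarrow> 'i \<Rightarrow> bool"
  pobj :: "'i \<Rightarrow> 'x set"
  ptr  :: "'i \<Rightarrow> 'i \<Rightarrow> 'x \<Rightarrow> 'x"   \<comment> \<open>ptr i j : X j \<rightarrow> X i for i \<le> j\<close>

definition proset :: "('i, 'x) pro_set \<Rightarrow> bool" where
  "proset X \<longleftrightarrow>
     (\<forall>i. pleq X i i) \<and>
     (\<forall>i j k. pleq X i j \<longrightarrow> pleq X j k \<longrightarrow> pleq X i k) \<and>
     (\<forall>i j. \<exists>k. pleq X i k \<and> pleq X j k) \<and>
     (\<forall>i j. pleq X i j \<longrightarrow> (\<forall>x\<in>pobj X j. ptr X i j x \<in> pobj X i)) \<and>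
     (\<forall>i. \<forall>x\<in>pobj X i. ptr X i i x = x) \<and>
     (\<forall>i j k. pleq X i j \<longrightarrow> pleq X j k \<longrightarrow>
        (\<forall>x\<in>pobj X k. ptr X i j (ptr X j k x) = ptr X i k x))"

text \<open>A representative of an element of
  Hom(X,Y) = lim_j colim_i Set(X i, Y j): for each j an index phi j and a map
  X (phi j) \<rightarrow> Y j, compatible in the colimit.\<close>
definition pro_rep :: "('i, 'x) pro_set \<Rightarrow> ('j, 'y) pro_set \<Rightarrow>
    ('j \<Rightarrow> 'i) \<times> ('j \<Rightarrow> 'x \<Rightarrow> 'y) \<Rightarrow> bool" where
  "pro_rep X Y f \<longleftrightarrow> (case f of (\<phi>, h) \<Rightarrow>
     (\<forall>j. \<forall>x\<in>pobj X (\<phi> j). h j x \<in> pobj Y j) \<and>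
     (\<forall>j j'. pleq Y j j' \<longrightarrow>
        (\<exists>i. pleq X (\<phi> j) i \<and> pleq X (\<phi> j') i \<and>
             (\<forall>x\<in>pobj X i. ptr Y j j' (h j' (ptr X (\<phi> j') i x)) = h j (ptr X (\<phi> j) i x)))))"

text \<open>Equality of morphisms (equality in the colimit for each target index).\<close>
definition pro_eq :: "('i, 'x) pro_set \<Rightarrow>
    ('j \<Rightarrow> 'i) \<times> ('j \<Rightarrow> 'x \<Rightarrow> 'y) \<Rightarrow> ('j \<Rightarrow> 'i) \<times> ('j \<Rightarrow> 'x \<Rightarrow> 'y) \<Rightarrow> bool" where
  "pro_eq X f g \<longleftrightarrow> (case f of (\<phi>, h) \<Rightarrow> case g of (\<psi>, k) \<Rightarrow>
     (\<forall>j. \<exists>i. pleq X (\<phi> j) i \<and> pleq X (\<psi> j) i \<and>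
        (\<forall>x\<in>pobj X i. h j (ptr X (\<phi> j) i x) = k j (ptr X (\<psi> j) i x))))"

text \<open>pro_comp f g is "g after f" for f : X \<rightarrow> Y, g : Y \<rightarrow> Z.\<close>
definition pro_comp :: "('j \<Rightarrow> 'i) \<times> ('j \<Rightarrow> 'x \<Rightarrow> 'y) \<Rightarrow> ('l \<Rightarrow> 'j) \<times> ('l \<Rightarrow> 'y \<Rightarrow> 'z)
    \<Rightarrow> ('l \<Rightarrow> 'i) \<times> ('l \<Rightarrow> 'x \<Rightarrow> 'z)" where
  "pro_comp f g = (case f of (\<phi>, h) \<Rightarrow> case g of (\<psi>, k) \<Rightarrow>
     (\<phi> \<circ> \<psi>, \<lambda>l x. k l (h (\<psi> l) x)))"

definition pro_id :: "('i \<Rightarrow> 'i) \<times> ('i \<Rightarrow> 'x \<Rightarrow> 'x)" where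
  "pro_id = (\<lambda>i. i, \<lambda>i x. x)"

definition pro_iso :: "('i, 'x) pro_set \<Rightarrow> ('j, 'y) pro_set \<Rightarrow>
    ('j \<Rightarrow> 'i) \<times> ('j \<Rightarrow> 'x \<Rightarrow> 'y) \<Rightarrow> bool" where
  "pro_iso X Y f \<longleftrightarrow> pro_rep X Y f \<and>
     (\<exists>g. pro_rep Y X g \<and> pro_eq X (pro_comp f g) pro_id \<and> pro_eq Y (pro_comp g f) pro_id)"

text \<open>Monomorphism: left-cancellable against all pro-sets W whose index type is
  'w and whose element type is 'z (these type variables are universally
  quantified in any theorem using it).\<close>
definition pro_mono :: "('w \<times> 'z) itself \<Rightarrow> ('i, 'x) pro_set \<Rightarrow> ('j, 'y) pro_set \<Rightarrow>
    ('j \<Rightarrow> 'i) \<times> ('j \<Rightarrow> 'x \<Rightarrow> 'y) \<Rightarrow> bool" where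
  "pro_mono _ X Y f \<longleftrightarrow> pro_rep X Y f \<and>
     (\<forall>(W :: ('w, 'z) pro_set) (u :: ('i \<Rightarrow> 'w) \<times> ('i \<Rightarrow> 'z \<Rightarrow> 'x)) v.
        proset W \<longrightarrow> pro_rep W X u \<longrightarrow> pro_rep W X v \<longrightarrow>
        pro_eq W (pro_comp u f) (pro_comp v f) \<longrightarrow> pro_eq W u v)"

definition const_proset :: "'x set \<Rightarrow> (unit, 'x) pro_set" where
  "const_proset S = \<lparr>pleq = (\<lambda>_ _. True), pobj = (\<lambda>_. S), ptr = (\<lambda>_ _ x. x)\<rparr>"

definition is_ideal :: "'k::comm_ring_1 set \<Rightarrow> bool" where
  "is_ideal I \<longleftrightarrow> 0 \<in> I \<and> (\<forall>x\<in>I. \<forall>y\<in>I. x + y \<in> I) \<and> (\<forall>r. \<forall>x\<in>I. r * x \<in> I)"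

definition noetherian :: "'k::comm_ring_1 itself \<Rightarrow> bool" where
  "noetherian _ \<longleftrightarrow> (\<forall>C :: nat \<Rightarrow> 'k set. (\<forall>n. is_ideal (C n)) \<longrightarrow>
      (\<forall>n. C n \<subseteq> C (Suc n)) \<longrightarrow> (\<exists>N. \<forall>n\<ge>N. C n = C N))"

text \<open>Unital K-subalgebra of the unitization A \<rtimes> K (= A \<times> K) generated by S.\<close>
inductive_set gen_alg :: "('k::comm_ring_1 \<Rightarrow> 'a::comm_ring \<Rightarrow> 'a) \<Rightarrow> ('a \<times> 'k) set \<Rightarrow> ('a \<times> 'k) set"
  for smul :: "'k::comm_ring_1 \<Rightarrow> 'a::comm_ring \<Rightarrow> 'a" and S :: "('a \<times> 'k) set" where
  gen_base: "x \<in> S \<Longrightarrow> x \<in> gen_alg smul S"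
| gen_one: "(0, 1) \<in> gen_alg smul S"
| gen_add: "(a, k) \<in> gen_alg smul S \<Longrightarrow> (b, l) \<in> gen_alg smul S \<Longrightarrow> (a + b, k + l) \<in> gen_alg smul S"
| gen_mult: "(a, k) \<in> gen_alg smul S \<Longrightarrow> (b, l) \<in> gen_alg smul S \<Longrightarrow>
      (a * b + smul l a + smul k b, k * l) \<in> gen_alg smul S"
| gen_scal: "(a, k) \<in> gen_alg smul S \<Longrightarrow> (smul r a, r * k) \<in> gen_alg smul S"

definition fg_unitization :: "('k::comm_ring_1 \<Rightarrow> 'a::comm_ring \<Rightarrow> 'a) \<Rightarrow> bool" where
  "fg_unitization smul \<longleftrightarrow> (\<exists>S. finite S \<and> gen_alg smul S = UNIV)"

text \<open>Colocalization A^(s^\<infinity>): A^(s^n) at level n, transition a \<mapsto> s a.\<close>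
definition coloc :: "('k::comm_ring_1 \<Rightarrow> 'a::comm_ring \<Rightarrow> 'a) \<Rightarrow> 'k \<Rightarrow> (nat, 'a) pro_set" where
  "coloc smul s = \<lparr>pleq = (\<le>), pobj = (\<lambda>_. UNIV), ptr = (\<lambda>m n a. smul (s ^ (n - m)) a)\<rparr>"

definition ideal_tower :: "('k::comm_ring_1 \<Rightarrow> 'a::comm_ring \<Rightarrow> 'a) \<Rightarrow> 'k \<Rightarrow> (nat, 'a) pro_set" where
  "ideal_tower smul s = \<lparr>pleq = (\<le>), pobj = (\<lambda>n. range (smul (s ^ n))), ptr = (\<lambda>m n x. x)\<rparr>"

text \<open>Localization A_s: classes of pairs (a, n) standing for a / s^n.\<close>
definition loc_rel :: "('k::comm_ring_1 \<Rightarrow> 'a::comm_ring \<Rightarrow> 'a) \<Rightarrow> 'k \<Rightarrow> 'a \<times> nat \<Rightarrow> 'a \<times> nat \<Rightarrow> bool" where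
  "loc_rel smul s p q \<longleftrightarrow> (case p of (a, n) \<Rightarrow> case q of (b, m) \<Rightarrow>
     (\<exists>k. smul (s ^ (k + m)) a = smul (s ^ (k + n)) b))"

definition loc_class :: "('k::comm_ring_1 \<Rightarrow> 'a::comm_ring \<Rightarrow> 'a) \<Rightarrow> 'k \<Rightarrow> 'a \<Rightarrow> nat \<Rightarrow> ('a \<times> nat) set" where
  "loc_class smul s a n = {q. loc_rel smul s (a, n) q}"

definition loc_set :: "('k::comm_ring_1 \<Rightarrow> 'a::comm_ring \<Rightarrow> 'a) \<Rightarrow> 'k \<Rightarrow> ('a \<times> nat) set set" where
  "loc_set smul s = {loc_class smul s a n | a n. True}"

end

theory Submission
  imports Defs "HOL-Algebra.Ring"
begin


locale ucr = cring R for R (structure) + assumes carr[simp]: "carrier R = UNIV"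
begin

definition subr :: "'a set \<Rightarrow> bool" where
 "subr S \<longleftrightarrow> \<zero> \<in> S \<and> \<one> \<in> S \<and> (\<forall>x\<in>S. \<forall>y\<in>S. x \<oplus> y \<in> S \<and> x \<otimes> y \<in> S) \<and> (\<forall>x\<in>S. \<ominus> x \<in> S)"

definition idl :: "'a set \<Rightarrow> 'a set \<Rightarrow> bool" where
 "idl S I \<longleftrightarrow> I \<subseteq> S \<and> \<zero> \<in> I \<and> (\<forall>x\<in>I. \<forall>y\<in>I. x \<oplus> y \<in> I) \<and> (\<forall>x\<in>I. \<ominus> x \<in> I)
    \<and> (\<forall>r\<in>S. \<forall>x\<in>I. r \<otimes> x \<in> I)"

definition noeth :: "'a set \<Rightarrow> bool" where
 "noeth S \<longleftrightarrow> (\<forall>C. (\<forall>n. idl S (C n)) \<longrightarrow> (\<forall>n. C n \<subseteq> C (Suc n)) \<longrightarrow> (\<exists>N. \<forall>n\<ge>N. C n = C N))"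

fun P :: "'a set \<Rightarrow> 'a \<Rightarrow> nat \<Rightarrow> 'a set" where
  "P S t 0 = {\<zero>}"
| "P S t (Suc d) = {c \<otimes> t [^] d \<oplus> q | c q. c \<in> S \<and> q \<in> P S t d}"

definition adj :: "'a set \<Rightarrow> 'a \<Rightarrow> 'a set" where
  "adj S t = (\<Union>d. P S t d)"

definition L :: "'a set \<Rightarrow> 'a \<Rightarrow> 'a set \<Rightarrow> nat \<Rightarrow> 'a set" where
  "L S t J d = {c \<in> S. \<exists>q \<in> P S t d. c \<otimes> t [^] d \<oplus> q \<in> J}"

lemma cl[simp]: "x \<in> carrier R" by simp

lemmas ralg = a_ac m_ac r_distr l_distr minus_add l_minus r_minus

lemma P_SucI: "c \<in> S \<Longrightarrow> q \<in> P S t d \<Longrightarrow> c \<otimes> t [^] d \<oplus> q \<in> P S t (Suc d)"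
  by auto

lemma subr_simps: assumes "subr S" shows "\<zero> \<in> S" "\<one> \<in> S" "x \<in> S \<Longrightarrow> y \<in> S \<Longrightarrow> x \<oplus> y \<in> S"
  "x \<in> S \<Longrightarrow> y \<in> S \<Longrightarrow> x \<otimes> y \<in> S" "x \<in> S \<Longrightarrow> \<ominus> x \<in> S"
  using assms by (auto simp: subr_def)

lemma P_zero: "subr S \<Longrightarrow> \<zero> \<in> P S t d"
proof (induction d)
  case 0 then show ?case by simp
next
  case (Suc d)
  have "\<zero> = \<zero> \<otimes> t [^] d \<oplus> \<zero>" by simp
  then show ?case using Suc P_SucI[of \<zero> S \<zero> t d] subr_simps[OF Suc.prems] by metis
qed

lemma P_add: "subr S \<Longrightarrow> x \<in> P S t d \<Longrightarrow> y \<in> P S t d \<Longrightarrow> x \<oplus> y \<in> P S t d"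
proof (induction d arbitrary: x y)
  case 0 then show ?case by simp
next
  case (Suc d)
  from Suc.prems obtain c q c' q' where x: "x = c \<otimes> t [^] d \<oplus> q" "c \<in> S" "q \<in> P S t d"
     and y: "y = c' \<otimes> t [^] d \<oplus> q'" "c' \<in> S" "q' \<in> P S t d" by auto
  have "x \<oplus> y = (c \<oplus> c') \<otimes> t [^] d \<oplus> (q \<oplus> q')" unfolding x y by (simp add: ralg)
  then show ?case using Suc x y P_SucI subr_simps[OF Suc.prems(1)] by metis
qed

lemma P_neg: "subr S \<Longrightarrow> x \<in> P S t d \<Longrightarrow> \<ominus> x \<in> P S t d"
proof (induction d arbitrary: x)
  case 0 then show ?case by simp
next
  case (Suc d)
  from Suc.prems obtain c q where x: "x = c \<otimes> t [^] d \<oplus> q" "c \<in> S" "q \<in> P S t d" by auto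
  have "\<ominus> x = (\<ominus> c) \<otimes> t [^] d \<oplus> (\<ominus> q)" unfolding x by (simp add: ralg)
  then show ?case using Suc x P_SucI subr_simps[OF Suc.prems(1)] by metis
qed

lemma P_smul: "subr S \<Longrightarrow> r \<in> S \<Longrightarrow> x \<in> P S t d \<Longrightarrow> r \<otimes> x \<in> P S t d"
proof (induction d arbitrary: x)
  case 0 then show ?case by simp
next
  case (Suc d)
  from Suc.prems obtain c q where x: "x = c \<otimes> t [^] d \<oplus> q" "c \<in> S" "q \<in> P S t d" by auto
  have "r \<otimes> x = (r \<otimes> c) \<otimes> t [^] d \<oplus> (r \<otimes> q)" unfolding x by (simp add: ralg)
  then show ?case using Suc x P_SucI subr_simps[OF Suc.prems(1)] by metis
qed

lemma P_mono: "subr S \<Longrightarrow> P S t d \<subseteq> P S t (Suc d)"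
proof
  fix x assume "subr S" "x \<in> P S t d"
  have "x = \<zero> \<otimes> t [^] d \<oplus> x" by simp
  then show "x \<in> P S t (Suc d)" using \<open>subr S\<close> \<open>x \<in> P S t d\<close> P_SucI subr_simps by metis
qed

lemma P_mono_le: assumes "subr S" "d \<le> e" shows "P S t d \<subseteq> P S t e"
  using assms(2) by (induction e rule: dec_induct) (use P_mono[OF assms(1)] in blast)+

lemma P_tmul: "subr S \<Longrightarrow> x \<in> P S t d \<Longrightarrow> t \<otimes> x \<in> P S t (Suc d)"
proof (induction d arbitrary: x)
  case 0
  have "t \<otimes> \<zero> = \<zero> \<otimes> t [^] (0::nat) \<oplus> \<zero>" by simp
  then show ?case using 0 P_SucI subr_simps by (metis P.simps(1) singletonD singletonI)
next
  case (Suc d)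
  from Suc.prems obtain c q where x: "x = c \<otimes> t [^] d \<oplus> q" "c \<in> S" "q \<in> P S t d" by auto
  have "t \<otimes> x = c \<otimes> t [^] (Suc d) \<oplus> (t \<otimes> q)" unfolding x nat_pow_Suc by (simp add: ralg)
  then show ?case using Suc x P_SucI subr_simps[OF Suc.prems(1)] by metis
qed

lemma P_tpow: "subr S \<Longrightarrow> x \<in> P S t d \<Longrightarrow> t [^] k \<otimes> x \<in> P S t (d + k)"
proof (induction k)
  case 0 then show ?case by simp
next
  case (Suc k)
  have "t [^] Suc k \<otimes> x = t \<otimes> (t [^] k \<otimes> x)" unfolding nat_pow_Suc by (simp add: ralg)
  then show ?case using P_tmul[OF Suc.prems(1) Suc.IH[OF Suc.prems]] by simp
qed

lemma P_mul: "subr S \<Longrightarrow> x \<in> P S t d \<Longrightarrow> y \<in> P S t e \<Longrightarrow> x \<otimes> y \<in> P S t (d + e)"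
proof (induction e arbitrary: y)
  case 0 then show ?case using P_zero by simp
next
  case (Suc e)
  from Suc.prems obtain c q where y: "y = c \<otimes> t [^] e \<oplus> q" "c \<in> S" "q \<in> P S t e" by auto
  have eq: "x \<otimes> y = c \<otimes> (t [^] e \<otimes> x) \<oplus> x \<otimes> q" unfolding y by (simp add: ralg)
  have "c \<otimes> (t [^] e \<otimes> x) \<in> P S t (d + e)"
    using P_smul[OF Suc.prems(1) y(2) P_tpow[OF Suc.prems(1,2)]] .
  then have "c \<otimes> (t [^] e \<otimes> x) \<in> P S t (d + Suc e)"
    using P_mono[OF Suc.prems(1), of t "d+e"] by auto
  moreover have "x \<otimes> q \<in> P S t (d + Suc e)"
    using Suc.IH[OF Suc.prems(1,2) y(3)] P_mono_le[OF Suc.prems(1), of "d+e" "d + Suc e"] by auto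
  ultimately show ?case unfolding eq using P_add[OF Suc.prems(1)] by blast
qed

lemma P_one: "subr S \<Longrightarrow> c \<in> S \<Longrightarrow> c \<in> P S t (Suc 0)"
proof -
  assume "subr S" "c \<in> S"
  have "c = c \<otimes> t [^] (0::nat) \<oplus> \<zero>" by simp
  then show ?thesis using \<open>subr S\<close> \<open>c \<in> S\<close> by auto
qed

lemma P_t: assumes "subr S" shows "t \<in> P S t 2"
proof -
  have "t = \<one> \<otimes> t [^] (1::nat) \<oplus> \<zero>" by simp
  moreover have "\<zero> \<in> P S t 1" using P_zero[OF assms] .
  ultimately show ?thesis using P_SucI[of \<one> S \<zero> t 1] subr_simps[OF assms] by (simp add: numeral_2_eq_2)
qed

lemma adj_subr: assumes S: "subr S" shows "subr (adj S t)"
proof -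
  have a: "\<exists>f. x \<oplus> y \<in> P S t f \<and> x \<otimes> y \<in> P S t f" if x: "x \<in> P S t d" and y: "y \<in> P S t e" for x y d e
  proof -
    have "x \<in> P S t (d+e)" "y \<in> P S t (d+e)" using x y P_mono_le[OF S, of d "d+e" t] P_mono_le[OF S, of e "d+e" t] by auto
    then show ?thesis using P_add[OF S] P_mul[OF S x y] by blast
  qed
  have "\<one> \<in> P S t 1" using P_one[OF S, of \<one> t] S by (auto simp: subr_def)
  then have "\<one> \<in> adj S t" unfolding adj_def by blast
  moreover have "\<zero> \<in> adj S t" unfolding adj_def using P_zero[OF S] by blast
  moreover have "\<forall>x\<in>adj S t. \<forall>y\<in>adj S t. x \<oplus> y \<in> adj S t \<and> x \<otimes> y \<in> adj S t"
    unfolding adj_def using a by (meson UN_E UN_I UNIV_I)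
  moreover have "\<forall>x\<in>adj S t. \<ominus> x \<in> adj S t" unfolding adj_def using P_neg[OF S] by blast
  ultimately show ?thesis unfolding subr_def by blast
qed

lemma P_adj: "P S t d \<subseteq> adj S t" unfolding adj_def by blast

lemma S_adj: "subr S \<Longrightarrow> S \<subseteq> adj S t" using P_one P_adj by blast

lemma t_adj: "subr S \<Longrightarrow> t \<in> adj S t" using P_t P_adj by blast

lemma idl_simps: assumes "idl S I" shows "I \<subseteq> S" "\<zero> \<in> I" "x \<in> I \<Longrightarrow> y \<in> I \<Longrightarrow> x \<oplus> y \<in> I"
  "x \<in> I \<Longrightarrow> \<ominus> x \<in> I" "r \<in> S \<Longrightarrow> x \<in> I \<Longrightarrow> r \<otimes> x \<in> I"
  using assms by (auto simp: idl_def)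

lemma L_idl: assumes S: "subr S" and J: "idl (adj S t) J" shows "idl S (L S t J d)"
proof -
  have z: "\<zero> \<in> L S t J d"
  proof -
    have "\<zero> \<otimes> t [^] d \<oplus> \<zero> = \<zero>" by simp
    then show ?thesis unfolding L_def using P_zero[OF S] idl_simps[OF J] subr_simps[OF S] by force
  qed
  have a: "x \<oplus> y \<in> L S t J d \<and> \<ominus> x \<in> L S t J d" if xL: "x \<in> L S t J d" and yL: "y \<in> L S t J d" for x y
  proof -
    obtain q where q: "x \<in> S" "q \<in> P S t d" "x \<otimes> t [^] d \<oplus> q \<in> J"
      using xL unfolding L_def by blast
    obtain q' where q': "y \<in> S" "q' \<in> P S t d" "y \<otimes> t [^] d \<oplus> q' \<in> J"
      using yL unfolding L_def by blast
    have e1: "(x \<otimes> t [^] d \<oplus> q) \<oplus> (y \<otimes> t [^] d \<oplus> q') = (x \<oplus> y) \<otimes> t [^] d \<oplus> (q \<oplus> q')" by (simp add: ralg)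
    have e2: "\<ominus> (x \<otimes> t [^] d \<oplus> q) = (\<ominus> x) \<otimes> t [^] d \<oplus> (\<ominus> q)" by (simp add: ralg)
    have 1: "(x \<oplus> y) \<otimes> t [^] d \<oplus> (q \<oplus> q') \<in> J" using idl_simps(3)[OF J q(3) q'(3)] e1 by simp
    have 2: "(\<ominus> x) \<otimes> t [^] d \<oplus> (\<ominus> q) \<in> J" using idl_simps(4)[OF J q(3)] e2 by simp
    have 3: "x \<oplus> y \<in> S" "\<ominus> x \<in> S" using subr_simps[OF S] q q' by auto
    have 4: "q \<oplus> q' \<in> P S t d" "\<ominus> q \<in> P S t d" using P_add[OF S q(2) q'(2)] P_neg[OF S q(2)] by auto
    show ?thesis unfolding L_def using 1 2 3 4 by blast
  qed
  have m: "r \<otimes> x \<in> L S t J d" if rS: "r \<in> S" and xL: "x \<in> L S t J d" for r x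
  proof -
    obtain q where q: "x \<in> S" "q \<in> P S t d" "x \<otimes> t [^] d \<oplus> q \<in> J" using xL unfolding L_def by blast
    have e: "r \<otimes> (x \<otimes> t [^] d \<oplus> q) = (r \<otimes> x) \<otimes> t [^] d \<oplus> (r \<otimes> q)" by (simp add: ralg)
    have "r \<in> adj S t" using S_adj[OF S] rS by blast
    then have 1: "(r \<otimes> x) \<otimes> t [^] d \<oplus> (r \<otimes> q) \<in> J" using idl_simps(5)[OF J _ q(3)] e by metis
    have 3: "r \<otimes> x \<in> S" using subr_simps[OF S] q rS by auto
    have 4: "r \<otimes> q \<in> P S t d" using P_smul[OF S rS q(2)] .
    show ?thesis unfolding L_def using 1 3 4 by blast
  qed
  show ?thesis unfolding idl_def using z a m by (auto simp: L_def)
qed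

lemma L_mono_d: assumes S: "subr S" and J: "idl (adj S t) J" shows "L S t J d \<subseteq> L S t J (Suc d)"
proof
  fix c assume "c \<in> L S t J d"
  then obtain q where q: "c \<in> S" "q \<in> P S t d" "c \<otimes> t [^] d \<oplus> q \<in> J" unfolding L_def by auto
  have e: "t \<otimes> (c \<otimes> t [^] d \<oplus> q) = c \<otimes> t [^] (Suc d) \<oplus> t \<otimes> q" unfolding nat_pow_Suc by (simp add: ralg)
  have "t \<otimes> (c \<otimes> t [^] d \<oplus> q) \<in> J" using idl_simps(5)[OF J t_adj[OF S] q(3)] .
  then show "c \<in> L S t J (Suc d)" unfolding L_def using e q P_tmul[OF S q(2)] by auto
qed

lemma L_mono_d_le: assumes S: "subr S" and J: "idl (adj S t) J" and "d \<le> e" shows "L S t J d \<subseteq> L S t J e"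
  using assms(3) by (induction e rule: dec_induct) (use L_mono_d[OF S J] in blast)+

lemma L_mono_J: "I \<subseteq> J \<Longrightarrow> L S t I d \<subseteq> L S t J d" unfolding L_def by blast

lemma L_eq: assumes S: "subr S" and I: "idl (adj S t) I" and J: "idl (adj S t) J" and IJ: "I \<subseteq> J"
  and LL: "\<And>d. L S t J d \<subseteq> L S t I d" shows "J \<subseteq> I"
proof -
  have "\<forall>f. f \<in> J \<and> f \<in> P S t d \<longrightarrow> f \<in> I" for d
  proof (induction d)
    case 0 then show ?case using idl_simps(2)[OF I] by simp
  next
    case (Suc d)
    show ?case
    proof (intro allI impI)
      fix f assume f: "f \<in> J \<and> f \<in> P S t (Suc d)"
      then obtain c q where cq: "f = c \<otimes> t [^] d \<oplus> q" "c \<in> S" "q \<in> P S t d" by auto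
      have "c \<in> L S t J d" unfolding L_def using f cq by auto
      then have "c \<in> L S t I d" using LL by blast
      then obtain q' where q': "q' \<in> P S t d" "c \<otimes> t [^] d \<oplus> q' \<in> I" unfolding L_def by auto
      define g where "g = c \<otimes> t [^] d \<oplus> q'"
      have e1: "f \<oplus> \<ominus> g = q \<oplus> \<ominus> q'" unfolding cq g_def
        using cl[of c] cl[of q] cl[of q'] cl[of "t [^] d"] by algebra
      have "f \<oplus> \<ominus> g \<in> J" using idl_simps(3,4)[OF J] f q'(2) IJ g_def by blast
      moreover have "f \<oplus> \<ominus> g \<in> P S t d" unfolding e1 using P_add[OF S cq(3) P_neg[OF S q'(1)]] .
      ultimately have "f \<oplus> \<ominus> g \<in> I" using Suc by blast
      then have "(f \<oplus> \<ominus> g) \<oplus> g \<in> I" using idl_simps(3)[OF I] q'(2) g_def by blast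
      moreover have "(f \<oplus> \<ominus> g) \<oplus> g = f" using cl[of f] cl[of g] by algebra
      ultimately show "f \<in> I" by simp
    qed
  qed
  moreover have "J \<subseteq> adj S t" using idl_simps(1)[OF J] .
  ultimately show ?thesis unfolding adj_def by blast
qed

lemma noethD: "noeth S \<Longrightarrow> (\<And>n. idl S (C n)) \<Longrightarrow> (\<And>n. C n \<subseteq> C (Suc n)) \<Longrightarrow> \<exists>N. \<forall>n\<ge>N. C n = C N"
  unfolding noeth_def by blast

theorem noeth_adj: assumes S: "subr S" and N: "noeth S" shows "noeth (adj S t)"
  unfolding noeth_def
proof (intro allI impI)
  fix C assume Ci: "\<forall>n. idl (adj S t) (C n)" and Cm: "\<forall>n. C n \<subseteq> C (Suc n)"
  define M where "M n d = L S t (C n) d" for n d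
  have Cle: "n \<le> m \<Longrightarrow> C n \<subseteq> C m" for n m by (rule lift_Suc_mono_le[of C]) (use Cm in auto)
  have Mn: "n \<le> m \<Longrightarrow> M n d \<subseteq> M m d" for n m d unfolding M_def using L_mono_J Cle by blast
  have Md: "d \<le> e \<Longrightarrow> M n d \<subseteq> M n e" for n d e unfolding M_def using L_mono_d_le[OF S] Ci by blast
  have Mi: "idl S (M n d)" for n d unfolding M_def using L_idl[OF S] Ci by blast
  have "M n n \<subseteq> M (Suc n) (Suc n)" for n using Mn[of n "Suc n" n] Md[of n "Suc n" "Suc n"] by auto
  then have "\<exists>p. \<forall>n\<ge>p. M n n = M p p" using noethD[OF N, of "\<lambda>n. M n n"] Mi by blast
  then obtain p where p: "\<And>n. n \<ge> p \<Longrightarrow> M n n = M p p" by blast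
  have "\<forall>d. \<exists>K. \<forall>n\<ge>K. M n d = M K d"
  proof
    fix d show "\<exists>K. \<forall>n\<ge>K. M n d = M K d"
    proof -
      have "\<And>n. M n d \<subseteq> M (Suc n) d" using Mn by simp
      then show ?thesis using noethD[OF N, of "\<lambda>n. M n d", OF Mi] by blast
    qed
  qed
  from choice[OF this] obtain K where K0: "\<forall>d. \<forall>n\<ge>K d. M n d = M (K d) d" by blast
  have K: "\<And>d n. n \<ge> K d \<Longrightarrow> M n d = M (K d) d" using K0 by blast
  define Nt where "Nt = p + (\<Sum>d<p. K d)"
  have pN: "p \<le> Nt" unfolding Nt_def by simp
  have KN: "d < p \<Longrightarrow> K d \<le> Nt" for d
  proof -
    assume "d < p"
    then have "K d \<le> (\<Sum>d<p. K d)" by (intro member_le_sum) auto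
    then show ?thesis unfolding Nt_def by linarith
  qed
  show "\<exists>N. \<forall>n\<ge>N. C n = C N"
  proof (intro exI allI impI)
    fix n assume n: "Nt \<le> n"
    have LL: "M n d \<subseteq> M Nt d" for d
    proof (cases "d < p")
      case True
      have "K d \<le> Nt" using KN True by blast
      moreover have "K d \<le> n" using \<open>K d \<le> Nt\<close> n by linarith
      ultimately have "M n d = M (K d) d" "M Nt d = M (K d) d" using K[of d n] K[of d Nt] by blast+
      then show ?thesis by simp
    next
      case False
      define m where "m = max n d"
      have "M n d \<subseteq> M m m" using Mn[of n m d] Md[of d m m] unfolding m_def by auto
      also have "\<dots> = M p p" proof -
          have "p \<le> m" using False unfolding m_def by simp
          then show ?thesis by (rule p)
        qed
      also have "\<dots> \<subseteq> M Nt d" using Mn[OF pN, of p] Md[of p d Nt] False by auto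
      finally show ?thesis .
    qed
    show "C n = C Nt"
      using L_eq[OF S Ci[rule_format, of Nt] Ci[rule_format, of n] Cle[OF n]] LL Cle[OF n] unfolding M_def by blast
  qed
qed

end


definition UR :: "('k::comm_ring_1 \<Rightarrow> 'a::comm_ring \<Rightarrow> 'a) \<Rightarrow> ('a \<times> 'k) ring" where
 "UR smul = \<lparr>carrier = UNIV,
    mult = (\<lambda>x y. (fst x * fst y + smul (snd y) (fst x) + smul (snd x) (fst y), snd x * snd y)),
    one = (0, 1), zero = (0, 0), add = (\<lambda>x y. (fst x + fst y, snd x + snd y))\<rparr>"

lemma UR_cring:
  fixes smul :: "'k::comm_ring_1 \<Rightarrow> 'a::comm_ring \<Rightarrow> 'a"
  assumes mod: "module smul" and c: "\<And>k a b. smul k (a * b) = smul k a * b"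
  shows "cring (UR smul)"
proof -
  interpret M: module smul by (rule mod)
  have c1: "smul k a * b = smul k (a * b)" for k a b using c by simp
  have c2: "a * smul k b = smul k (a * b)" for k a b using c[of k b a] by (simp add: mult.commute)
  note ss = c1 c2 M.scale_right_distrib M.scale_left_distrib
  show ?thesis
  proof (rule cringI)
    show "abelian_group (UR smul)"
      by (rule abelian_groupI) (auto simp: UR_def algebra_simps, (metis add.right_inverse)+)
    show "comm_monoid (UR smul)"
      by (rule comm_monoidI) (auto simp: UR_def ss algebra_simps)
    show "\<And>x y z. x \<in> carrier (UR smul) \<Longrightarrow> y \<in> carrier (UR smul) \<Longrightarrow> z \<in> carrier (UR smul) \<Longrightarrow>
       (x \<oplus>\<^bsub>UR smul\<^esub> y) \<otimes>\<^bsub>UR smul\<^esub> z = x \<otimes>\<^bsub>UR smul\<^esub> z \<oplus>\<^bsub>UR smul\<^esub> y \<otimes>\<^bsub>UR smul\<^esub> z"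
      by (auto simp: UR_def ss algebra_simps)
  qed
qed

lemma UR_simps: "carrier (UR smul) = UNIV" "x \<oplus>\<^bsub>UR smul\<^esub> y = (fst x + fst y, snd x + snd y)"
  "x \<otimes>\<^bsub>UR smul\<^esub> y = (fst x * fst y + smul (snd y) (fst x) + smul (snd x) (fst y), snd x * snd y)"
  "\<zero>\<^bsub>UR smul\<^esub> = (0, 0)" "\<one>\<^bsub>UR smul\<^esub> = (0, 1)"
  by (simp_all add: UR_def)

lemma UR_ucr:
  assumes mod: "module smul" and c: "\<And>k a b. smul k (a * b) = smul k a * b"
  shows "ucr (UR smul)"
  by (intro ucr.intro UR_cring[OF mod c]) (simp add: ucr_axioms_def UR_def)

lemma UR_neg:
  assumes mod: "module smul" and c: "\<And>k a b. smul k (a * b) = smul k a * b"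
  shows "\<ominus>\<^bsub>UR smul\<^esub> x = (- fst x, - snd x)"
proof -
  interpret U: ucr "UR smul" by (rule UR_ucr[OF mod c])
  show ?thesis by (rule U.minus_equality) (auto simp: UR_simps)
qed

lemma UR_noeth:
  fixes smul :: "'k::comm_ring_1 \<Rightarrow> 'a::comm_ring \<Rightarrow> 'a"
  assumes noe: "noetherian TYPE('k)" and mod: "module smul" and c: "\<And>k a b. smul k (a * b) = smul k a * b"
    and fg: "fg_unitization smul"
  shows "ucr.noeth (UR smul) UNIV"
proof -
  interpret U: ucr "UR smul" by (rule UR_ucr[OF mod c])
  interpret M: module smul by (rule mod)
  note neg = UR_neg[OF mod c]
  define S0 where "S0 = range (\<lambda>r::'k. (0::'a, r))"
  have subr0: "U.subr S0" unfolding U.subr_def S0_def by (auto simp: UR_simps neg)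
  have noeth0: "U.noeth S0" unfolding U.noeth_def
  proof (intro allI impI)
    fix C assume Ci: "\<forall>n. U.idl S0 (C n)" and Cm: "\<forall>n. C n \<subseteq> C (Suc n)"
    define D where "D n = snd ` C n" for n
    have "is_ideal (D n)" for n
    proof -
      have I: "U.idl S0 (C n)" using Ci by blast
      have sub: "C n \<subseteq> S0" using U.idl_simps(1)[OF I] .
      have "(0, 0) \<in> C n" using U.idl_simps(2)[OF I] by (simp add: UR_simps)
      then have z: "0 \<in> D n" unfolding D_def by force
      have a: "x + y \<in> D n" if "x \<in> D n" "y \<in> D n" for x y
      proof -
        have "(0, x) \<in> C n" "(0, y) \<in> C n" using that sub unfolding D_def S0_def by force+
        then have "(0, x) \<oplus>\<^bsub>UR smul\<^esub> (0, y) \<in> C n" using U.idl_simps(3)[OF I] by blast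
        then show ?thesis unfolding D_def by (force simp: UR_simps)
      qed
      have m: "r * x \<in> D n" if "x \<in> D n" for r x
      proof -
        have "(0, x) \<in> C n" using that sub unfolding D_def S0_def by force
        moreover have "(0, r) \<in> S0" unfolding S0_def by blast
        ultimately have "(0, r) \<otimes>\<^bsub>UR smul\<^esub> (0, x) \<in> C n" using U.idl_simps(5)[OF I] by blast
        then show ?thesis unfolding D_def by (force simp: UR_simps)
      qed
      show ?thesis unfolding is_ideal_def using z a m by blast
    qed
    moreover have "D n \<subseteq> D (Suc n)" for n unfolding D_def using Cm by blast
    ultimately obtain N where N: "\<forall>n\<ge>N. D n = D N" using noe unfolding noetherian_def by blast
    have CD: "C n = (\<lambda>r. (0, r)) ` D n" for n
    proof -
      have "C n \<subseteq> S0" using U.idl_simps(1) Ci by blast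
      then show ?thesis unfolding D_def S0_def by force
    qed
    show "\<exists>N. \<forall>n\<ge>N. C n = C N" using N CD by metis
  qed
  obtain G where G: "finite G" "gen_alg smul G = UNIV" using fg unfolding fg_unitization_def by blast
  have "\<exists>Q. U.subr Q \<and> U.noeth Q \<and> S0 \<subseteq> Q \<and> G \<subseteq> Q" using G(1)
  proof (induction G rule: finite_induct)
    case empty then show ?case using subr0 noeth0 by blast
  next
    case (insert x F)
    then obtain Q where Q: "U.subr Q" "U.noeth Q" "S0 \<subseteq> Q" "F \<subseteq> Q" by blast
    show ?case
      using U.adj_subr[OF Q(1), of x] U.noeth_adj[OF Q(1,2), of x] U.S_adj[OF Q(1), of x] U.t_adj[OF Q(1), of x] Q(3,4)
      by blast
  qed
  then obtain Q where Q: "U.subr Q" "U.noeth Q" "S0 \<subseteq> Q" "G \<subseteq> Q" by blast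
  have "x \<in> Q" if "x \<in> gen_alg smul G" for x
    using that
  proof (induction rule: gen_alg.induct)
    case (gen_base x) then show ?case using Q by blast
  next
    case gen_one then show ?case using U.subr_simps(2)[OF Q(1)] by (simp add: UR_simps)
  next
    case (gen_add a k b l)
    then show ?case using U.subr_simps(3)[OF Q(1), of "(a, k)" "(b, l)"] by (simp add: UR_simps)
  next
    case (gen_mult a k b l)
    then show ?case using U.subr_simps(4)[OF Q(1), of "(a, k)" "(b, l)"] by (simp add: UR_simps)
  next
    case (gen_scal a k r)
    have "(0, r) \<in> Q" using Q(3) unfolding S0_def by blast
    then show ?case using gen_scal U.subr_simps(4)[OF Q(1), of "(0, r)" "(a, k)"] by (simp add: UR_simps)
  qed
  then have "Q = UNIV" using G(2) by blast
  then show ?thesis using Q(2) by simp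
qed

lemma tors_bound:
  fixes smul :: "'k::comm_ring_1 \<Rightarrow> 'a::comm_ring \<Rightarrow> 'a" and s :: 'k
  assumes noe: "noetherian TYPE('k)" and mod: "module smul" and c: "\<And>k a b. smul k (a * b) = smul k a * b"
    and fg: "fg_unitization smul"
  shows "\<exists>c. \<forall>m a. smul (s ^ m) a = 0 \<longrightarrow> smul (s ^ c) a = 0"
proof -
  interpret U: ucr "UR smul" by (rule UR_ucr[OF mod c])
  interpret M: module smul by (rule mod)
  note neg = UR_neg[OF mod c]
  have N: "U.noeth UNIV" by (rule UR_noeth[OF noe mod c fg])
  define T where "T n = {x. snd x = (0::'k) \<and> smul (s ^ n) (fst x) = 0}" for n
  have c2: "smul k (a * b) = a * smul k b" for k a b using c[of k b a] by (simp add: mult.commute)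
  have "U.idl UNIV (T n)" for n
  proof -
    have m: "smul (s^n) (b * a + smul 0 b + smul l a) = 0" if "smul (s^n) a = 0" for b l a
    proof -
      have "smul (s^n) (smul l a) = smul l (smul (s^n) a)" by (rule M.scale_left_commute)
      then show ?thesis using that by (simp add: M.scale_right_distrib c2)
    qed
    show ?thesis unfolding U.idl_def T_def using m by (auto simp: UR_simps neg M.scale_right_distrib)
  qed
  moreover have "T n \<subseteq> T (Suc n)" for n
  proof
    fix x assume "x \<in> T n"
    then have "smul s (smul (s ^ n) (fst x)) = 0" "snd x = 0" unfolding T_def by auto
    then show "x \<in> T (Suc n)" unfolding T_def by (simp add: mult.commute)
  qed
  ultimately obtain c where cT: "\<forall>n\<ge>c. T n = T c" using U.noethD[OF N, of T] by blast
  have "smul (s ^ c) a = 0" if "smul (s ^ m) a = 0" for m a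
  proof (cases "m \<le> c")
    case True
    have "smul (s ^ c) a = smul (s ^ (c - m)) (smul (s ^ m) a)" using True by (simp add: power_add[symmetric])
    then show ?thesis using that by simp
  next
    case False
    have "(a, 0) \<in> T m" using that unfolding T_def by simp
    moreover have "c \<le> m" using False by simp
    then have "T m = T c" using cT by blast
    ultimately have "(a, 0) \<in> T c" by simp
    then show ?thesis unfolding T_def by simp
  qed
  then show ?thesis by blast
qed



lemma part1:
  fixes smul :: "'k::comm_ring_1 \<Rightarrow> 'a::comm_ring \<Rightarrow> 'a" and s :: 'k
  assumes mod: "module smul" and tb: "\<forall>m a. smul (s ^ m) a = 0 \<longrightarrow> smul (s ^ c) a = 0"
  shows "pro_iso (coloc smul s) (ideal_tower smul s) (\<lambda>n. n, \<lambda>n a. smul (s ^ n) a)"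
proof -
  interpret M: module smul by (rule mod)
  have canc: "smul (s^m) a = smul (s^m) b \<Longrightarrow> smul (s^c) a = smul (s^c) b" for m a b
    using tb[rule_format, of m "a - b"] by (simp add: M.scale_right_diff_distrib)
  have sp: "smul (s^i) (smul (s^j) a) = smul (s^(i+j)) a" for i j a by (simp add: power_add)
  define k where "k n y = smul (s^c) (SOME a. y = smul (s^(n+c)) a)" for n y
  have kk: "k n (smul (s^(n+c)) b) = smul (s^c) b" for n b
  proof -
    let ?a = "SOME a. smul (s^(n+c)) b = smul (s^(n+c)) a"
    have "smul (s^(n+c)) b = smul (s^(n+c)) ?a" by (rule someI) (rule refl)
    hence "smul (s^c) b = smul (s^c) ?a" by (rule canc)
    then show ?thesis unfolding k_def by simp
  qed
  have rep_f: "pro_rep (coloc smul s) (ideal_tower smul s) (\<lambda>n. n, \<lambda>n a. smul (s ^ n) a)"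
    unfolding pro_rep_def coloc_def ideal_tower_def
    apply simp
    apply (intro allI impI)
    subgoal for j j' by (rule exI[of _ j']) (simp add: power_add[symmetric])
    done
  have rep_g: "pro_rep (ideal_tower smul s) (coloc smul s) (\<lambda>n. n + c, k)"
    unfolding pro_rep_def coloc_def ideal_tower_def
  proof (simp, intro allI impI)
    fix j j' :: nat assume jj: "j \<le> j'"
    show "\<exists>i\<ge>j + c. j' + c \<le> i \<and> (\<forall>x. smul (s ^ (j' - j)) (k j' (smul (s ^ i) x)) = k j (smul (s ^ i) x))"
    proof (intro exI[of _ "j' + c"] conjI allI)
      fix x
      have e: "j + c + (j' - j) = j' + c" using jj by simp
      have "smul (s ^ (j' + c)) x = smul (s ^ (j + c)) (smul (s ^ (j' - j)) x)" unfolding sp e ..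
      then have "k j (smul (s ^ (j' + c)) x) = smul (s^c) (smul (s ^ (j' - j)) x)" using kk by metis
      then show "smul (s ^ (j' - j)) (k j' (smul (s ^ (j' + c)) x)) = k j (smul (s ^ (j' + c)) x)"
        using kk[of j' x] by (simp add: sp add.commute mult.commute)
    qed (use jj in auto)
  qed
  have eq1: "pro_eq (coloc smul s) (pro_comp (\<lambda>n. n, \<lambda>n a. smul (s ^ n) a) (\<lambda>n. n + c, k)) pro_id"
    unfolding pro_eq_def coloc_def pro_comp_def pro_id_def
    apply simp
    apply (intro allI)
    subgoal for j by (rule exI[of _ "j + c"]) (simp add: kk)
    done
  have eq2: "pro_eq (ideal_tower smul s) (pro_comp (\<lambda>n. n + c, k) (\<lambda>n. n, \<lambda>n a. smul (s ^ n) a)) pro_id"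
    unfolding pro_eq_def ideal_tower_def pro_comp_def pro_id_def
    apply simp
    apply (intro allI)
    subgoal for j by (rule exI[of _ "j + c"]) (simp add: kk sp power_add[symmetric])
    done
  show ?thesis unfolding pro_iso_def using rep_f rep_g eq1 eq2 by blast
qed



lemma proset_tr:
  assumes W: "proset W" and ab: "pleq W a b" and bi: "pleq W b i" and x: "x \<in> pobj W i"
  shows "ptr W a b (ptr W b i x) = ptr W a i x" "ptr W b i x \<in> pobj W b" "pleq W a i"
  using assms unfolding proset_def by blast+

lemma proset_in: "proset W \<Longrightarrow> pleq W a i \<Longrightarrow> x \<in> pobj W i \<Longrightarrow> ptr W a i x \<in> pobj W a"
  unfolding proset_def by blast

lemma proset_ub: "proset W \<Longrightarrow> \<exists>k. pleq W i k \<and> pleq W j k"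
  unfolding proset_def by blast

lemma proset_trans: "proset W \<Longrightarrow> pleq W i j \<Longrightarrow> pleq W j k \<Longrightarrow> pleq W i k"
  unfolding proset_def by blast

lemma part2:
  fixes smul :: "'k::comm_ring_1 \<Rightarrow> 'a::comm_ring \<Rightarrow> 'a" and s :: 'k
  assumes mod: "module smul" and tb: "\<forall>m a. smul (s ^ m) a = 0 \<longrightarrow> smul (s ^ c) a = 0"
  shows "pro_mono TYPE('w \<times> 'z) (ideal_tower smul s) (const_proset (loc_set smul s))
        (\<lambda>_. 0, \<lambda>_ x. loc_class smul s x 0)"
proof -
  interpret M: module smul by (rule mod)
  have canc: "smul (s^m) a = smul (s^m) b \<Longrightarrow> smul (s^c) a = smul (s^c) b" for m a b
    using tb[rule_format, of m "a - b"] by (simp add: M.scale_right_diff_distrib)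
  have sp: "smul (s^i) (smul (s^j) a) = smul (s^(i+j)) a" for i j a by (simp add: power_add)
  have key: "A = B" if A: "A \<in> range (smul (s ^ (n + c)))" and B: "B \<in> range (smul (s ^ (n + c)))"
    and AB: "loc_class smul s A 0 = loc_class smul s B 0" for A B n
  proof -
    have "(B, 0) \<in> loc_class smul s B 0" unfolding loc_class_def loc_rel_def by auto
    then have "(B, 0) \<in> loc_class smul s A 0" using AB by simp
    then obtain k where k: "smul (s ^ k) A = smul (s ^ k) B" unfolding loc_class_def loc_rel_def by auto
    obtain a b where ab: "A = smul (s ^ (n + c)) a" "B = smul (s ^ (n + c)) b" using A B by blast
    have "smul (s ^ (k + (n + c))) a = smul (s ^ (k + (n + c))) b" using k unfolding ab sp .
    then have "smul (s ^ c) a = smul (s ^ c) b" by (rule canc)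
    then have "smul (s ^ n) (smul (s ^ c) a) = smul (s ^ n) (smul (s ^ c) b)" by simp
    then show ?thesis unfolding ab sp .
  qed
  have rep: "pro_rep (ideal_tower smul s) (const_proset (loc_set smul s)) (\<lambda>_. 0, \<lambda>_ x. loc_class smul s x 0)"
    unfolding pro_rep_def ideal_tower_def const_proset_def loc_set_def by auto
  have main: "pro_eq W u v"
    if W: "proset W" and ru: "pro_rep W (ideal_tower smul s) u" and rv: "pro_rep W (ideal_tower smul s) v"
      and eq: "pro_eq W (pro_comp u (\<lambda>_. 0, \<lambda>_ x. loc_class smul s x 0)) (pro_comp v (\<lambda>_. 0, \<lambda>_ x. loc_class smul s x 0))"
    for W :: "('w, 'z) pro_set" and u v
  proof -
    obtain pu hu where u: "u = (pu, hu)" by (cases u)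
    obtain pv hv where v: "v = (pv, hv)" by (cases v)
    have ru1: "\<And>j x. x \<in> pobj W (pu j) \<Longrightarrow> hu j x \<in> range (smul (s ^ j))"
      using ru unfolding u pro_rep_def ideal_tower_def by auto
    have ru2: "\<And>j j'. j \<le> j' \<Longrightarrow> \<exists>i. pleq W (pu j) i \<and> pleq W (pu j') i \<and>
        (\<forall>x\<in>pobj W i. hu j' (ptr W (pu j') i x) = hu j (ptr W (pu j) i x))"
      using ru unfolding u pro_rep_def ideal_tower_def by auto
    have rv1: "\<And>j x. x \<in> pobj W (pv j) \<Longrightarrow> hv j x \<in> range (smul (s ^ j))"
      using rv unfolding v pro_rep_def ideal_tower_def by auto
    have rv2: "\<And>j j'. j \<le> j' \<Longrightarrow> \<exists>i. pleq W (pv j) i \<and> pleq W (pv j') i \<and>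
        (\<forall>x\<in>pobj W i. hv j' (ptr W (pv j') i x) = hv j (ptr W (pv j) i x))"
      using rv unfolding v pro_rep_def ideal_tower_def by auto
    obtain i0 where i0: "pleq W (pu 0) i0" "pleq W (pv 0) i0"
      "\<forall>x\<in>pobj W i0. loc_class smul s (hu 0 (ptr W (pu 0) i0 x)) 0 = loc_class smul s (hv 0 (ptr W (pv 0) i0 x)) 0"
      using eq unfolding u v pro_eq_def pro_comp_def by auto
    show ?thesis unfolding u v pro_eq_def
    proof (simp, intro allI)
      fix n
      define m where "m = n + c"
      have nm: "0 \<le> m" "n \<le> m" unfolding m_def by auto
      obtain a1 where a1: "pleq W (pu 0) a1" "pleq W (pu m) a1"
        "\<forall>x\<in>pobj W a1. hu m (ptr W (pu m) a1 x) = hu 0 (ptr W (pu 0) a1 x)" using ru2[OF nm(1)] by blast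
      obtain a2 where a2: "pleq W (pu n) a2" "pleq W (pu m) a2"
        "\<forall>x\<in>pobj W a2. hu m (ptr W (pu m) a2 x) = hu n (ptr W (pu n) a2 x)" using ru2[OF nm(2)] by blast
      obtain b1 where b1: "pleq W (pv 0) b1" "pleq W (pv m) b1"
        "\<forall>x\<in>pobj W b1. hv m (ptr W (pv m) b1 x) = hv 0 (ptr W (pv 0) b1 x)" using rv2[OF nm(1)] by blast
      obtain b2 where b2: "pleq W (pv n) b2" "pleq W (pv m) b2"
        "\<forall>x\<in>pobj W b2. hv m (ptr W (pv m) b2 x) = hv n (ptr W (pv n) b2 x)" using rv2[OF nm(2)] by blast
      obtain k1 where k1: "pleq W a1 k1" "pleq W a2 k1" using proset_ub[OF W] by blast
      obtain k2 where k2: "pleq W b1 k2" "pleq W b2 k2" using proset_ub[OF W] by blast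
      obtain k3 where k3: "pleq W k1 k3" "pleq W k2 k3" using proset_ub[OF W] by blast
      obtain i where i: "pleq W k3 i" "pleq W i0 i" using proset_ub[OF W] by blast
      note tr = proset_trans[OF W]
      have a1i: "pleq W a1 i" "pleq W a2 i" "pleq W b1 i" "pleq W b2 i"
        using tr[OF tr[OF k1(1) k3(1)] i(1)] tr[OF tr[OF k1(2) k3(1)] i(1)]
          tr[OF tr[OF k2(1) k3(2)] i(1)] tr[OF tr[OF k2(2) k3(2)] i(1)] by auto
      have lei: "pleq W (pu n) i" "pleq W (pv n) i"
        using tr[OF a2(1) a1i(2)] tr[OF b2(1) a1i(4)] by auto
      show "\<exists>i. pleq W (pu n) i \<and> pleq W (pv n) i \<and>
          (\<forall>x\<in>pobj W i. hu n (ptr W (pu n) i x) = hv n (ptr W (pv n) i x))"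
      proof (intro exI conjI ballI)
        show "pleq W (pu n) i" "pleq W (pv n) i" by (rule lei)+
        fix x assume x: "x \<in> pobj W i"
        have U1: "hu m (ptr W (pu m) i x) = hu 0 (ptr W (pu 0) i x)"
          using a1(3)[rule_format, OF proset_tr(2)[OF W a1(1) a1i(1) x]]
            proset_tr(1)[OF W a1(1) a1i(1) x] proset_tr(1)[OF W a1(2) a1i(1) x] by simp
        have U2: "hu m (ptr W (pu m) i x) = hu n (ptr W (pu n) i x)"
          using a2(3)[rule_format, OF proset_tr(2)[OF W a2(1) a1i(2) x]]
            proset_tr(1)[OF W a2(1) a1i(2) x] proset_tr(1)[OF W a2(2) a1i(2) x] by simp
        have V1: "hv m (ptr W (pv m) i x) = hv 0 (ptr W (pv 0) i x)"
          using b1(3)[rule_format, OF proset_tr(2)[OF W b1(1) a1i(3) x]]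
            proset_tr(1)[OF W b1(1) a1i(3) x] proset_tr(1)[OF W b1(2) a1i(3) x] by simp
        have V2: "hv m (ptr W (pv m) i x) = hv n (ptr W (pv n) i x)"
          using b2(3)[rule_format, OF proset_tr(2)[OF W b2(1) a1i(4) x]]
            proset_tr(1)[OF W b2(1) a1i(4) x] proset_tr(1)[OF W b2(2) a1i(4) x] by simp
        have L: "loc_class smul s (hu 0 (ptr W (pu 0) i x)) 0 = loc_class smul s (hv 0 (ptr W (pv 0) i x)) 0"
          using i0(3)[rule_format, OF proset_tr(2)[OF W i0(1) i(2) x]]
            proset_tr(1)[OF W i0(1) i(2) x] proset_tr(1)[OF W i0(2) i(2) x] by simp
        have pm: "pleq W (pu m) i" "pleq W (pv m) i"
          using tr[OF a1(2) a1i(1)] tr[OF b1(2) a1i(3)] by auto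
        have A: "hu m (ptr W (pu m) i x) \<in> range (smul (s ^ (n + c)))"
          using ru1[OF proset_in[OF W pm(1) x]] unfolding m_def .
        have B: "hv m (ptr W (pv m) i x) \<in> range (smul (s ^ (n + c)))"
          using rv1[OF proset_in[OF W pm(2) x]] unfolding m_def .
        have "hu m (ptr W (pu m) i x) = hv m (ptr W (pv m) i x)"
          by (rule key[OF A B]) (use U1 V1 L in simp)
        then show "hu n (ptr W (pu n) i x) = hv n (ptr W (pv n) i x)" using U2 V2 by simp
      qed
    qed
  qed
  show ?thesis unfolding pro_mono_def using rep main by blast
qed


theorem lemma4:
  fixes smul :: "'k::comm_ring_1 \<Rightarrow> 'a::comm_ring \<Rightarrow> 'a" and s :: 'k
  assumes "noetherian TYPE('k)"
    and "module smul"
    and "\<And>k a b. smul k (a * b) = smul k a * b"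
    and "fg_unitization smul"
  shows "pro_iso (coloc smul s) (ideal_tower smul s) (\<lambda>n. n, \<lambda>n a. smul (s ^ n) a)
    \<and> pro_mono TYPE('w \<times> 'z) (ideal_tower smul s) (const_proset (loc_set smul s))
        (\<lambda>_. 0, \<lambda>_ x. loc_class smul s x 0)"
proof -
  obtain c where tb: "\<forall>m a. smul (s ^ m) a = 0 \<longrightarrow> smul (s ^ c) a = 0"
    using tors_bound[OF assms(1,2,3,4), of s] by blast
  show ?thesis using part1[OF assms(2) tb] part2[OF assms(2) tb] by blast
qed

end
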